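(* Let $E$ be a closed formula in which all bound variables are pairwise distinct, let $S$ be the (finite) set of pieces of $E$, and let $d$ be the maximum depth of nested variables in $E$. Let $T$ be the finite set of LJB-sequents whose formulas all belong to $S$, whose bracket subscripts are all of the form $V(x)$ for some variable $x$ of $E$, and whose depth is at most $d$. Then only LJB-sequents of $T$ can occur in a derivation of $\vdash E$ in LJB.
   Context: Formulas: $A ::= P(t_1,\dots,t_n)\mid A\rightarrow A\mid\forall x\,A$, with first-order terms. A formula is a tree with nodes labelled by atomic formulas, $\rightarrow$, or $\forall x$; the pieces of $E$ are the formulas associated to the positions of this tree (the subtrees, without any substitution of variables). In $E$ each bound variable $x$ labels a unique position $\forall x$; $V(x)$ is the set of variables bound in the piece $\forall x\,A$ at that position. The maximum depth of nested variables is the maximal number of nodes labelled by a quantifier $\forall$ along a single root-to-leaf path of $E$. LJB: an LJB-context is a finite multiset of items; an item is a formula or $[\Gamma]_V$ ($V$ a finite set of variables bound by the bracket, $\Gamma$ an LJB-context); $FV([\Gamma]_V)=FV(\Gamma)\setminus V$. Depth: $depth(A)=0$ for a formula, $depth([\Gamma]_V)=1+depth(\Gamma)$, $depth(\{I_1,\dots,I_n\})=\max_i depth(I_i)$; the depth of an LJB-sequent is that of its context. Cleaning rules (anywhere in a context): $[I,\Gamma]_V\longrightarrow I,[\Gamma]_V$ if $FV(I)\cap V=\emptyset$; $[\ ]_V\longrightarrow\emptyset$; $I\,I\longrightarrow I$; $\Gamma{\downarrow}$ is the normal form for a fixed strategy. LJB rules apply only to LJB-sequents with normal context in which, in each formula,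 bound variables are distinct and distinct from free variables; formulas are not identified modulo $\alpha$. Rules: (L$\rightarrow$) from $\Gamma'\vdash A_1,\dots,\Gamma'\vdash A_n$ infer $\Gamma\vdash P$, where $\Gamma=\Gamma_1,[\Gamma_2,[\dots\Gamma_{i-1},[\Gamma_i, A_1\rightarrow\dots\rightarrow A_n\rightarrow P]_{V_{i-1}}\dots]_{V_2}]_{V_1}$ ($i\ge1$), $\Gamma'=([\dots[[\Gamma_1]_{V_1},\Gamma_2]_{V_2},\dots,\Gamma_{i-1}]_{V_{i-1}},\Gamma_i,A_1\rightarrow\dots\rightarrow A_n\rightarrow P){\downarrow}$, $P$ atomic with no free variable in $V_1\cup\dots\cup V_{i-1}$; (R$\forall$) from $[\Gamma]_V{\downarrow}\vdash A$ infer $\Gamma\vdash\forall x\,A$, $V$ the set of all variables bound in $\forall x\,A$; (R$\rightarrow$) from $(\Gamma,A){\downarrow}\vdash B$ infer $\Gamma\vdash A\rightarrow B$. *)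

theory Defs
  imports Main "HOL-Library.Multiset"
begin

datatype ('f,'v) trm = Var 'v | Fn 'f "('f,'v) trm list"

datatype ('p,'f,'v) fm =
    Atom 'p "('f,'v) trm list"
  | Imp "('p,'f,'v) fm" "('p,'f,'v) fm"
  | All 'v "('p,'f,'v) fm"

primrec tvars :: "('f,'v) trm \<Rightarrow> 'v set" where
  "tvars (Var x) = {x}"
| "tvars (Fn f ts) = \<Union> (set (map tvars ts))"

primrec fv :: "('p,'f,'v) fm \<Rightarrow> 'v set" where
  "fv (Atom p ts) = \<Union> (set (map tvars ts))"
| "fv (Imp A B) = fv A \<union> fv B"
| "fv (All x A) = fv A - {x}"

primrec bvl :: "('p,'f,'v) fm \<Rightarrow> 'v list" where
  "bvl (Atom p ts) = []"
| "bvl (Imp A B) = bvl A @ bvl B"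
| "bvl (All x A) = x # bvl A"

text \<open>Pieces: formulas at the positions of the formula tree (subtrees, no substitution).\<close>
primrec pieces :: "('p,'f,'v) fm \<Rightarrow> ('p,'f,'v) fm set" where
  "pieces (Atom p ts) = {Atom p ts}"
| "pieces (Imp A B) = insert (Imp A B) (pieces A \<union> pieces B)"
| "pieces (All x A) = insert (All x A) (pieces A)"

primrec qdepth :: "('p,'f,'v) fm \<Rightarrow> nat" where
  "qdepth (Atom p ts) = 0"
| "qdepth (Imp A B) = max (qdepth A) (qdepth B)"
| "qdepth (All x A) = Suc (qdepth A)"

text \<open>The sets V(x): variables bound in the piece \<forall>x A of E at the position labelled x.\<close>
definition Vsets :: "('p,'f,'v) fm \<Rightarrow> 'v set set" where
  "Vsets E = {set (bvl (All x A)) | x A. All x A \<in> pieces E}"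

primrec imps :: "('p,'f,'v) fm list \<Rightarrow> ('p,'f,'v) fm \<Rightarrow> ('p,'f,'v) fm" where
  "imps [] P = P"
| "imps (A # As) P = Imp A (imps As P)"

definition wellvar :: "('p,'f,'v) fm \<Rightarrow> bool" where
  "wellvar A \<longleftrightarrow> distinct (bvl A) \<and> set (bvl A) \<inter> fv A = {}"

datatype ('p,'f,'v) item =
    Fm "('p,'f,'v) fm"
  | Br "'v set" "('p,'f,'v) item multiset"

type_synonym ('p,'f,'v) ctx = "('p,'f,'v) item multiset"
type_synonym ('p,'f,'v) seq = "('p,'f,'v) ctx \<times> ('p,'f,'v) fm"

primrec FVi :: "('p,'f,'v) item \<Rightarrow> 'v set" where
  "FVi (Fm A) = fv A"
| "FVi (Br V G) = \<Union> (set_mset (image_mset FVi G)) - V"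

primrec idepth :: "('p,'f,'v) item \<Rightarrow> nat" where
  "idepth (Fm A) = 0"
| "idepth (Br V G) = Suc (Max (insert 0 (set_mset (image_mset idepth G))))"

definition cdepth :: "('p,'f,'v) ctx \<Rightarrow> nat" where
  "cdepth G = Max (insert 0 (set_mset (image_mset idepth G)))"

primrec ifms :: "('p,'f,'v) item \<Rightarrow> ('p,'f,'v) fm set" where
  "ifms (Fm A) = {A}"
| "ifms (Br V G) = \<Union> (set_mset (image_mset ifms G))"

primrec isubs :: "('p,'f,'v) item \<Rightarrow> 'v set set" where
  "isubs (Fm A) = {}"
| "isubs (Br V G) = insert V (\<Union> (set_mset (image_mset isubs G)))"

definition cfms :: "('p,'f,'v) ctx \<Rightarrow> ('p,'f,'v) fm set" where
  "cfms G = \<Union> (ifms ` set_mset G)"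

definition csubs :: "('p,'f,'v) ctx \<Rightarrow> 'v set set" where
  "csubs G = \<Union> (isubs ` set_mset G)"

inductive clean1 :: "('p,'f,'v) ctx \<Rightarrow> ('p,'f,'v) ctx \<Rightarrow> bool" where
  push:   "FVi I \<inter> V = {} \<Longrightarrow>
             clean1 (add_mset (Br V (add_mset I G)) D) (add_mset I (add_mset (Br V G) D))"
| empty:  "clean1 (add_mset (Br V {#}) D) D"
| dup:    "clean1 (add_mset I (add_mset I D)) (add_mset I D)"
| inside: "clean1 G G' \<Longrightarrow> clean1 (add_mset (Br V G) D) (add_mset (Br V G') D)"

definition clean_normal :: "('p,'f,'v) ctx \<Rightarrow> bool" where
  "clean_normal G \<longleftrightarrow> \<not> (\<exists>G'. clean1 G G')"

definition strategy :: "(('p,'f,'v) ctx \<Rightarrow> ('p,'f,'v) ctx) \<Rightarrow> bool" where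
  "strategy down \<longleftrightarrow> (\<forall>G. clean1\<^sup>*\<^sup>* G (down G) \<and> clean_normal (down G))"

text \<open>nest_in [(G1,V1),...,(G_{i-1},V_{i-1})] C = G1,[G2,[...[C]_{V_{i-1}}...]_{V2}]_{V1}\<close>
primrec nest_in :: "(('p,'f,'v) ctx \<times> 'v set) list \<Rightarrow> ('p,'f,'v) ctx \<Rightarrow> ('p,'f,'v) ctx" where
  "nest_in [] C = C"
| "nest_in (GV # L) C = add_mset (Br (snd GV) (nest_in L C)) (fst GV)"

text \<open>nest_out [(G1,V1),...,(G_{i-1},V_{i-1})] {#} = [...[[G1]_{V1},G2]_{V2},...,G_{i-1}]_{V_{i-1}}\<close>
primrec nest_out :: "(('p,'f,'v) ctx \<times> 'v set) list \<Rightarrow> ('p,'f,'v) ctx \<Rightarrow> ('p,'f,'v) ctx" where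
  "nest_out [] acc = acc"
| "nest_out (GV # L) acc = nest_out L {# Br (snd GV) (acc + fst GV) #}"

definition ljb_ok :: "('p,'f,'v) seq \<Rightarrow> bool" where
  "ljb_ok s \<longleftrightarrow> clean_normal (fst s) \<and> (\<forall>A \<in> insert (snd s) (cfms (fst s)). wellvar A)"

inductive ljb_rule :: "(('p,'f,'v) ctx \<Rightarrow> ('p,'f,'v) ctx) \<Rightarrow> ('p,'f,'v) seq list \<Rightarrow> ('p,'f,'v) seq \<Rightarrow> bool"
  for down where
  Limp: "\<lbrakk> P = Atom p ts; fv P \<inter> \<Union> (snd ` set L) = {};
           G = nest_in L (add_mset (Fm (imps As P)) Gi);
           G' = down (nest_out L {#} + add_mset (Fm (imps As P)) Gi);
           ljb_ok (G, P) \<rbrakk>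
         \<Longrightarrow> ljb_rule down (map (\<lambda>A. (G', A)) As) (G, P)"
| Rall: "\<lbrakk> V = set (bvl (All x A)); ljb_ok (G, All x A) \<rbrakk>
         \<Longrightarrow> ljb_rule down [(down {# Br V G #}, A)] (G, All x A)"
| Rimp: "ljb_ok (G, Imp A B) \<Longrightarrow> ljb_rule down [(down (add_mset (Fm A) G), B)] (G, Imp A B)"

datatype ('p,'f,'v) dtree = DNode "('p,'f,'v) seq" "('p,'f,'v) dtree list"

primrec droot :: "('p,'f,'v) dtree \<Rightarrow> ('p,'f,'v) seq" where
  "droot (DNode s ts) = s"

primrec dnodes :: "('p,'f,'v) dtree \<Rightarrow> ('p,'f,'v) seq set" where
  "dnodes (DNode s ts) = insert s (\<Union> (set (map dnodes ts)))"

primrec valid_deriv :: "(('p,'f,'v) ctx \<Rightarrow> ('p,'f,'v) ctx) \<Rightarrow> ('p,'f,'v) dtree \<Rightarrow> bool" where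
  "valid_deriv down (DNode s ts) \<longleftrightarrow> ljb_rule down (map droot ts) s \<and> list_all (valid_deriv down) ts"

definition Tset :: "('p,'f,'v) fm \<Rightarrow> ('p,'f,'v) seq set" where
  "Tset E = {(G, A). insert A (cfms G) \<subseteq> pieces E \<and> csubs G \<subseteq> Vsets E \<and> cdepth G \<le> qdepth E}"

end

theory Submission
  imports Defs
begin

primrec occs :: "('p,'f,'v) fm \<Rightarrow> 'v list \<Rightarrow> (('p,'f,'v) fm \<times> 'v list) set" where
  "occs (Atom p ts) ps = {(Atom p ts, ps)}"
| "occs (Imp A B) ps = insert (Imp A B, ps) (occs A ps \<union> occs B ps)"
| "occs (All x A) ps = insert (All x A, ps) (occs A (ps @ [x]))"

lemma occs_pieces: "(C, bs) \<in> occs E ps \<Longrightarrow> C \<in> pieces E"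
  by (induction E arbitrary: ps) auto

lemma pieces_occs: "C \<in> pieces E \<Longrightarrow> \<exists>bs. (C, bs) \<in> occs E ps"
  by (induction E arbitrary: ps) auto

lemma occs_L1: "(C, bs) \<in> occs E ps \<Longrightarrow> \<exists>ds. bs = ps @ ds \<and> set ds \<subseteq> set (bvl E) \<and>
   fv C \<subseteq> fv E \<union> set ds \<and> set (bvl C) \<subseteq> set (bvl E) \<and> qdepth C \<le> qdepth E"
proof (induction E arbitrary: ps)
  case (Atom p ts)
  then show ?case by auto
next
  case (Imp A B)
  then show ?case by (fastforce simp: max_def)
next
  case (All x A)
  show ?case
  proof (cases "(C, bs) = (All x A, ps)")
    case True
    then show ?thesis by auto
  next
    case False
    then have "(C, bs) \<in> occs A (ps @ [x])" using All.prems by auto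
    from All.IH[OF this] obtain ds where "bs = (ps @ [x]) @ ds" "set ds \<subseteq> set (bvl A)"
      "fv C \<subseteq> fv A \<union> set ds" "set (bvl C) \<subseteq> set (bvl A)" "qdepth C \<le> qdepth A" by blast
    then show ?thesis by (intro exI[of _ "x # ds"]) auto
  qed
qed

lemma occs_L4: "(C, bs) \<in> occs E ps \<Longrightarrow> distinct (ps @ bvl E) \<Longrightarrow> distinct (bs @ bvl C)"
proof (induction E arbitrary: ps)
  case (Atom p ts)
  then show ?case by auto
next
  case (Imp A B)
  then show ?case by auto
next
  case (All x A)
  show ?case
  proof (cases "(C, bs) = (All x A, ps)")
    case True
    then show ?thesis using All.prems by auto
  next
    case False
    then have "(C, bs) \<in> occs A (ps @ [x])" using All.prems by auto
    moreover have "distinct ((ps @ [x]) @ bvl A)" using All.prems by auto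
    ultimately show ?thesis using All.IH by blast
  qed
qed

lemma occs_K: "(C, bs) \<in> occs E ps \<Longrightarrow> (All x A, as) \<in> occs E ps \<Longrightarrow> distinct (ps @ bvl E)
  \<Longrightarrow> z \<in> set bs \<Longrightarrow> z \<in> set (bvl (All x A)) \<Longrightarrow> (C, bs) \<in> occs (All x A) as"
proof (induction E arbitrary: ps)
  case (Atom p ts)
  then show ?case by auto
next
  case (Imp E1 E2)
  have bx: "set (bvl (All x A)) \<subseteq> set (bvl (Imp E1 E2))"
    using occs_L1[OF Imp.prems(2)] by blast
  show ?case
  proof (cases "(C, bs) = (Imp E1 E2, ps)")
    case True
    then show ?thesis using Imp.prems bx by auto
  next
    case False
    then have c: "(C, bs) \<in> occs E1 ps \<or> (C, bs) \<in> occs E2 ps" using Imp.prems by auto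
    have a: "(All x A, as) \<in> occs E1 ps \<or> (All x A, as) \<in> occs E2 ps" using Imp.prems by auto
    have d1: "distinct (ps @ bvl E1)" "distinct (ps @ bvl E2)" using Imp.prems by auto
    show ?thesis
    proof -
      { assume c1: "(C, bs) \<in> occs E1 ps" and a2: "(All x A, as) \<in> occs E2 ps"
        obtain ds where "bs = ps @ ds" "set ds \<subseteq> set (bvl E1)" using occs_L1[OF c1] by blast
        moreover have "set (bvl (All x A)) \<subseteq> set (bvl E2)" using occs_L1[OF a2] by blast
        ultimately have False using Imp.prems by auto }
      moreover
      { assume c1: "(C, bs) \<in> occs E2 ps" and a2: "(All x A, as) \<in> occs E1 ps"
        obtain ds where "bs = ps @ ds" "set ds \<subseteq> set (bvl E2)" using occs_L1[OF c1] by blast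
        moreover have "set (bvl (All x A)) \<subseteq> set (bvl E1)" using occs_L1[OF a2] by blast
        ultimately have False using Imp.prems by auto }
      ultimately show ?thesis using c a d1 Imp.IH Imp.prems(4,5) by blast
    qed
  qed
next
  case (All y E1)
  have bx: "set (bvl (All x A)) \<subseteq> set (bvl (All y E1))"
    using occs_L1[OF All.prems(2)] by blast
  show ?case
  proof (cases "(C, bs) = (All y E1, ps)")
    case True
    then show ?thesis using All.prems bx by auto
  next
    case False
    then have c: "(C, bs) \<in> occs E1 (ps @ [y])" using All.prems by auto
    show ?thesis
    proof (cases "(All x A, as) = (All y E1, ps)")
      case True
      then show ?thesis using c by auto
    next
      case False
      then have "(All x A, as) \<in> occs E1 (ps @ [y])" using All.prems by auto
      moreover have "distinct ((ps @ [y]) @ bvl E1)" using All.prems by auto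
      ultimately show ?thesis using All.IH c All.prems(4,5) by blast
    qed
  qed
qed

lemma cfms_simps[simp]:
  "cfms {#} = {}" "cfms (add_mset I G) = ifms I \<union> cfms G" "cfms (G + H) = cfms G \<union> cfms H"
  by (auto simp: cfms_def)

lemma csubs_simps[simp]:
  "csubs {#} = {}" "csubs (add_mset I G) = isubs I \<union> csubs G" "csubs (G + H) = csubs G \<union> csubs H"
  by (auto simp: csubs_def)

lemma ifms_Br[simp]: "ifms (Br V G) = cfms G"
  by (simp add: cfms_def)

lemma isubs_Br[simp]: "isubs (Br V G) = insert V (csubs G)"
  by (simp add: csubs_def)

declare ifms.simps(2)[simp del] isubs.simps(2)[simp del]

lemma clean1_sub: "clean1 G G' \<Longrightarrow> cfms G' \<subseteq> cfms G \<and> csubs G' \<subseteq> csubs G"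
  by (induction rule: clean1.induct) auto

lemma cleans_sub: "clean1\<^sup>*\<^sup>* G G' \<Longrightarrow> cfms G' \<subseteq> cfms G \<and> csubs G' \<subseteq> csubs G"
proof (induction rule: rtranclp_induct)
  case base
  then show ?case by simp
next
  case (step y z)
  then show ?case using clean1_sub[OF step(2)] by blast
qed

lemma nest_out_sub: "cfms (nest_out L acc) = cfms acc \<union> (\<Union>GV\<in>set L. cfms (fst GV)) \<and>
   csubs (nest_out L acc) = csubs acc \<union> (\<Union>GV\<in>set L. insert (snd GV) (csubs (fst GV)))"
  by (induction L arbitrary: acc) auto

lemma nest_in_sub: "cfms (nest_in L C) = cfms C \<union> (\<Union>GV\<in>set L. cfms (fst GV)) \<and>
   csubs (nest_in L C) = csubs C \<union> (\<Union>GV\<in>set L. insert (snd GV) (csubs (fst GV)))"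
  by (induction L) auto

lemma pieces_trans: "B \<in> pieces C \<Longrightarrow> C \<in> pieces E \<Longrightarrow> B \<in> pieces E"
  by (induction E) auto

lemma pieces_self: "E \<in> pieces E"
  by (cases E) auto

lemma imps_pieces: "A \<in> set As \<Longrightarrow> A \<in> pieces (imps As P)"
  by (induction As) (auto simp: pieces_self)

definition good :: "('p,'f,'v) fm \<Rightarrow> ('p,'f,'v) seq \<Rightarrow> bool" where
  "good E s \<longleftrightarrow> snd s \<in> pieces E \<and> cfms (fst s) \<subseteq> pieces E \<and> csubs (fst s) \<subseteq> Vsets E"

lemma rule_good:
  assumes strat: "strategy down" and r: "ljb_rule down ps s" and g: "good E s"
  shows "ljb_ok s \<and> (\<forall>p \<in> set ps. good E p)"
  using r
proof cases
  case (Limp P p ts L G As Gi G')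
  have dn: "cfms (down X) \<subseteq> cfms X \<and> csubs (down X) \<subseteq> csubs X" for X
    using strat unfolding strategy_def using cleans_sub by blast
  have H: "imps As P \<in> pieces E" using g Limp nest_in_sub[of L] by (auto simp: good_def)
  have "cfms G' \<subseteq> pieces E \<and> csubs G' \<subseteq> Vsets E"
  proof -
    have "cfms (nest_out L {#} + add_mset (Fm (imps As P)) Gi) \<subseteq> pieces E \<and>
          csubs (nest_out L {#} + add_mset (Fm (imps As P)) Gi) \<subseteq> Vsets E"
      using g Limp nest_in_sub[of L] nest_out_sub[of L] by (auto simp: good_def)
    then show ?thesis using dn[of "nest_out L {#} + add_mset (Fm (imps As P)) Gi"] Limp by blast
  qed
  moreover have "A \<in> set As \<Longrightarrow> A \<in> pieces E" for A
    using imps_pieces pieces_trans H by blast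
  ultimately show ?thesis using Limp by (auto simp: good_def)
next
  case (Rall V x A G)
  have dn: "cfms (down X) \<subseteq> cfms X \<and> csubs (down X) \<subseteq> csubs X" for X
    using strat unfolding strategy_def using cleans_sub by blast
  have xA: "All x A \<in> pieces E" using g Rall by (auto simp: good_def)
  then have "A \<in> pieces E" using pieces_trans[of A "All x A" E] by (auto simp: pieces_self)
  moreover have "V \<in> Vsets E" using xA Rall unfolding Vsets_def by blast
  ultimately show ?thesis using Rall g dn[of "{# Br V G #}"] by (auto simp: good_def)
next
  case (Rimp G A B)
  have dn: "cfms (down X) \<subseteq> cfms X \<and> csubs (down X) \<subseteq> csubs X" for X
    using strat unfolding strategy_def using cleans_sub by blast
  have AB: "Imp A B \<in> pieces E" using g Rimp by (auto simp: good_def)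
  then have "A \<in> pieces E" "B \<in> pieces E" using pieces_trans[of _ "Imp A B" E] by (auto simp: pieces_self)
  then show ?thesis using Rimp g dn[of "add_mset (Fm A) G"] by (auto simp: good_def)
qed

lemma deriv_good:
  assumes strat: "strategy down"
  shows "valid_deriv down D \<Longrightarrow> good E (droot D) \<Longrightarrow> (\<forall>s \<in> dnodes D. good E s \<and> ljb_ok s)"
proof (induction D)
  case (DNode s ts)
  have r: "ljb_rule down (map droot ts) s" and v: "list_all (valid_deriv down) ts"
    using DNode.prems by auto
  from rule_good[OF strat r] DNode.prems have "ljb_ok s" "\<forall>p \<in> set (map droot ts). good E p"
    by auto
  moreover have "\<forall>t \<in> set ts. \<forall>s' \<in> dnodes t. good E s' \<and> ljb_ok s'"
    using DNode.IH v calculation(2) by (auto simp: list_all_iff)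
  ultimately show ?case using DNode.prems by auto
qed


lemma normal_sub:
  assumes n: "clean_normal G" and I: "Br V \<Delta> \<in># G"
  shows "clean_normal \<Delta> \<and> (\<forall>J \<in># \<Delta>. FVi J \<inter> V \<noteq> {})"
proof
  show "clean_normal \<Delta>"
  proof (unfold clean_normal_def, rule notI)
    assume "\<exists>G'. clean1 \<Delta> G'"
    then obtain G' where "clean1 \<Delta> G'" by blast
    then have "clean1 (add_mset (Br V \<Delta>) (G - {#Br V \<Delta>#})) (add_mset (Br V G') (G - {#Br V \<Delta>#}))"
      by (rule clean1.inside)
    then show False using n I by (metis clean_normal_def insert_DiffM)
  qed
next
  show "\<forall>J \<in># \<Delta>. FVi J \<inter> V \<noteq> {}"
  proof (intro ballI notI)
    fix J assume J: "J \<in># \<Delta>" and e: "FVi J \<inter> V = {}"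
    have "clean1 (add_mset (Br V (add_mset J (\<Delta> - {#J#}))) (G - {#Br V \<Delta>#}))
       (add_mset J (add_mset (Br V (\<Delta> - {#J#})) (G - {#Br V \<Delta>#})))"
      using e by (rule clean1.push)
    then show False using n I J by (metis clean_normal_def insert_DiffM)
  qed
qed

lemma M:
  assumes closed: "fv E = {}" and dist: "distinct (bvl E)"
  shows "clean_normal G \<Longrightarrow> I \<in># G \<Longrightarrow> ifms I \<subseteq> pieces E \<Longrightarrow> isubs I \<subseteq> Vsets E \<Longrightarrow>
    (\<exists>C bs. (C, bs) \<in> occs E [] \<and> FVi I \<subseteq> set bs) \<and>
    (\<forall>V \<Delta> x A as. I = Br V \<Delta> \<longrightarrow> V = set (bvl (All x A)) \<longrightarrow> (All x A, as) \<in> occs E [] \<longrightarrow>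
        FVi I \<subseteq> set as \<and> idepth I \<le> qdepth (All x A))"
proof (induction I arbitrary: G)
  case (Fm B)
  then have "B \<in> pieces E" by simp
  then obtain bs where b: "(B, bs) \<in> occs E []" using pieces_occs by blast
  then have "fv B \<subseteq> set bs" using occs_L1[OF b] closed by auto
  then show ?case using b by auto
next
  case (Br V \<Delta>)
  have nd: "clean_normal \<Delta>" and ne: "\<forall>J \<in># \<Delta>. FVi J \<inter> V \<noteq> {}"
    using normal_sub[OF Br.prems(1,2)] by auto
  have IHJ: "\<And>J. J \<in># \<Delta> \<Longrightarrow> (\<exists>C bs. (C, bs) \<in> occs E [] \<and> FVi J \<subseteq> set bs) \<and>
    (\<forall>V \<Delta> x A as. J = Br V \<Delta> \<longrightarrow> V = set (bvl (All x A)) \<longrightarrow> (All x A, as) \<in> occs E [] \<longrightarrow>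
        FVi J \<subseteq> set as \<and> idepth J \<le> qdepth (All x A))"
  proof -
    fix J assume J: "J \<in># \<Delta>"
    have "ifms J \<subseteq> pieces E" "isubs J \<subseteq> Vsets E" using J Br.prems(3,4)
      by (auto simp: cfms_def csubs_def)
    then show "?thesis J" using Br.IH[OF _ nd J] J by blast
  qed
  have second: "FVi (Br V \<Delta>) \<subseteq> set as \<and> idepth (Br V \<Delta>) \<le> qdepth (All x A)"
    if V: "V = set (bvl (All x A))" and xA: "(All x A, as) \<in> occs E []" for x A as
  proof
    show "FVi (Br V \<Delta>) \<subseteq> set as"
    proof
      fix w assume "w \<in> FVi (Br V \<Delta>)"
      then obtain J where J: "J \<in># \<Delta>" and w: "w \<in> FVi J" "w \<notin> V" by auto
      obtain C bs where cb: "(C, bs) \<in> occs E []" "FVi J \<subseteq> set bs" using IHJ[OF J] by blast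
      obtain z where z: "z \<in> FVi J" "z \<in> V" using ne J by blast
      have "(C, bs) \<in> occs (All x A) as"
        using occs_K[OF cb(1) xA _ _ ] dist z cb(2) V by auto
      from occs_L1[OF this] obtain ds where "bs = as @ ds" "set ds \<subseteq> set (bvl (All x A))" by blast
      then show "w \<in> set as" using w cb(2) V by auto
    qed
  next
    have "\<forall>J \<in># \<Delta>. idepth J \<le> qdepth A"
    proof
      fix J assume J: "J \<in># \<Delta>"
      show "idepth J \<le> qdepth A"
      proof (cases J)
        case (Fm B)
        then show ?thesis by simp
      next
        case (Br W \<Delta>')
        have "W \<in> isubs J" using Br by simp
        then have "W \<in> Vsets E" using Br.prems(4) J by (auto simp: csubs_def)
        then obtain y B where yB: "W = set (bvl (All y B))" "All y B \<in> pieces E"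
          unfolding Vsets_def by blast
        obtain bs where b: "(All y B, bs) \<in> occs E []" using pieces_occs[OF yB(2)] by blast
        have h: "FVi J \<subseteq> set bs" "idepth J \<le> qdepth (All y B)"
          using IHJ[OF J] Br yB(1) b by blast+
        obtain z where z: "z \<in> FVi J" "z \<in> V" using ne J by blast
        have o: "(All y B, bs) \<in> occs (All x A) as"
          using occs_K[OF b xA _ _ ] dist z h(1) V by auto
        show ?thesis
        proof (cases "(All y B, bs) = (All x A, as)")
          case True
          have "distinct (as @ bvl (All x A))" using occs_L4[OF xA] dist by simp
          then show ?thesis using True z h(1) V by auto
        next
          case False
          then have "(All y B, bs) \<in> occs A (as @ [x])" using o by auto
          then show ?thesis using occs_L1 h(2) by fastforce
        qed
      qed
    qed
    then have "Max (insert 0 (idepth ` set_mset \<Delta>)) \<le> qdepth A" by (simp add: Max_le_iff)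
    then show "idepth (Br V \<Delta>) \<le> qdepth (All x A)" by simp
  qed
  have "V \<in> Vsets E" using Br.prems(4) by simp
  then obtain x A where xA: "V = set (bvl (All x A))" "All x A \<in> pieces E"
    unfolding Vsets_def by blast
  obtain as where a: "(All x A, as) \<in> occs E []" using pieces_occs[OF xA(2)] by blast
  show ?case using second[OF xA(1) a] a second by blast
qed

theorem proposition13:
  fixes E :: "('p,'f,'v) fm"
    and down :: "('p,'f,'v) ctx \<Rightarrow> ('p,'f,'v) ctx"
    and D :: "('p,'f,'v) dtree"
  assumes closed: "fv E = {}"
    and distinct_bound: "distinct (bvl E)"
    and strat: "strategy down"
    and deriv: "valid_deriv down D"
    and root: "droot D = ({#}, E)"
  shows "dnodes D \<subseteq> Tset E"
proof
  fix s assume s: "s \<in> dnodes D"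
  have "good E (droot D)" using root by (simp add: good_def pieces_self)
  then have gs: "good E s \<and> ljb_ok s" using deriv_good[OF strat deriv] s by blast
  obtain G A where sGA: "s = (G, A)" by fastforce
  have n: "clean_normal G" using gs sGA by (simp add: ljb_ok_def)
  have "\<forall>I \<in># G. idepth I \<le> qdepth E"
  proof
    fix I assume I: "I \<in># G"
    show "idepth I \<le> qdepth E"
    proof (cases I)
      case (Fm B)
      then show ?thesis by simp
    next
      case (Br V \<Delta>)
      have ps: "ifms I \<subseteq> pieces E" "isubs I \<subseteq> Vsets E"
        using gs sGA I by (auto simp: good_def cfms_def csubs_def)
      then have "V \<in> Vsets E" using Br by simp
      then obtain x A' where xA: "V = set (bvl (All x A'))" "All x A' \<in> pieces E"
        unfolding Vsets_def by blast
      obtain as where a: "(All x A', as) \<in> occs E []" using pieces_occs[OF xA(2)] by blast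
      have "idepth I \<le> qdepth (All x A')"
        using M[OF closed distinct_bound n I ps] Br xA(1) a by blast
      moreover have "qdepth (All x A') \<le> qdepth E" using occs_L1[OF a] by blast
      ultimately show ?thesis by linarith
    qed
  qed
  then have "cdepth G \<le> qdepth E" by (simp add: cdepth_def Max_le_iff)
  then show "s \<in> Tset E" using gs sGA by (simp add: Tset_def good_def)
qed

end
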